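(* Let $\varphi(x)=\sum_{i\ge0}\gamma_ix^i\in\mathbb{K}[[x]]$ and let $r$ be an even integer. If $r<0$, assume $\gamma_i=0$ for each $i\le -r$. Stipulating $\gamma_i=0$ for $i<0$, the $\gamma_i$ satisfy $$\sum_{i=0}^{m-1}(-1)^i\binom{m-1}{i}\gamma_{m-r+i}=0$$ for each $m\ge1$ if and only if $\varphi\in\mathcal{F}_r$.
   Context: $\mathbb{K}\in\{\mathbb{Q},\mathbb{R},\mathbb{C}\}$. For $r\in\mathbb{Z}$, $\mathcal{F}_r$ denotes the space of $\varphi\in\mathbb{K}[[x]]$ with $\varphi(x/(x-1))=(1-x)^r\varphi(x)$. *)

theory Defs
  imports "HOL-Computational_Algebra.Formal_Power_Series"
begin

definition fps_int_power :: "'a::field fps \<Rightarrow> int \<Rightarrow> 'a fps" where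
  "fps_int_power f r = (if 0 \<le> r then f ^ nat r else inverse (f ^ nat (- r)))"

definition F_space :: "int \<Rightarrow> 'a::field fps set" where
  "F_space r = {\<phi>. \<phi> oo (fps_X * inverse (fps_X - 1)) = fps_int_power (1 - fps_X) r * \<phi>}"

definition coeff_int :: "'a::zero fps \<Rightarrow> int \<Rightarrow> 'a" where
  "coeff_int \<phi> j = (if j < 0 then 0 else fps_nth \<phi> (nat j))"

end

theory Submission
  imports Defs
begin

definition E :: "int \<Rightarrow> 'a::field_char_0 fps" where
  "E k = Abs_fps (\<lambda>t. (-1)^t * (of_int k gchoose t))"

lemma E_nth: "fps_nth (E k) t = (-1)^t * (of_int k gchoose t)"
  by (simp add: E_def)

lemma E_add: "(E (a + b) :: 'a::field_char_0 fps) = E a * E b"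
proof (rule fps_ext)
  fix n
  have "fps_nth (E a * E b :: 'a fps) n = (\<Sum>i=0..n. (-1)^n * ((of_int a gchoose i) * (of_int b gchoose (n - i))))"
    unfolding fps_mult_nth E_nth
    by (rule sum.cong) (auto simp: power_add[symmetric])
  also have "\<dots> = (-1)^n * (of_int (a+b) gchoose n)"
    by (simp add: sum_distrib_left[symmetric] gbinomial_Vandermonde)
  finally show "fps_nth (E (a+b)) n = fps_nth (E a * E b :: 'a fps) n" by (simp add: E_nth)
qed

lemma E_0: "(E 0 :: 'a::field_char_0 fps) = 1"
proof (rule fps_ext)
  fix n
  have "(0::'a) gchoose n = of_nat (0 choose n)" using binomial_gbinomial[of 0 n, where 'a='a] by simp
  then show "fps_nth (E 0 :: 'a::field_char_0 fps) n = fps_nth 1 n" by (cases n) (auto simp: E_nth)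
qed

lemma E_1: "(E 1 :: 'a::field_char_0 fps) = 1 - fps_X"
proof (rule fps_ext)
  fix n
  have "(1::'a) gchoose n = of_nat (1 choose n)" using binomial_gbinomial[of 1 n, where 'a='a] by simp
  then show "fps_nth (E 1 :: 'a::field_char_0 fps) n = fps_nth (1 - fps_X) n"
    by (cases n) (auto simp: E_nth binomial_eq_0)
qed

lemma E_neg: "(E (-k) :: 'a::field_char_0 fps) * E k = 1"
  using E_add[of "-k" k, where 'a='a] by (simp add: E_0)

lemma E_nat: "(E (int n) :: 'a::field_char_0 fps) = (1 - fps_X) ^ n"
proof (induction n)
  case 0 then show ?case by (simp add: E_0)
next
  case (Suc n)
  have "(E (int (Suc n)) :: 'a fps) = E 1 * E (int n)"
    using E_add[of 1 "int n", where 'a='a] by simp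
  then show ?case using Suc by (simp add: E_1)
qed

lemma int_power_E: "fps_int_power (1 - fps_X) k = (E k :: 'a::field_char_0 fps)"
proof (cases "0 \<le> k")
  case True
  then show ?thesis by (simp add: fps_int_power_def E_nat[symmetric])
next
  case False
  then have "(1 - fps_X) ^ nat (-k) = (E (-k) :: 'a fps)"
    using E_nat[of "nat (-k)", where 'a='a] by simp
  moreover have "(E (-k) :: 'a fps) * E k = 1"
    using E_neg[of k, where 'a='a] by simp
  ultimately show ?thesis using False
    by (simp add: fps_int_power_def fps_inverse_unique)
qed

definition G :: "'a::field_char_0 fps" where
  "G = fps_X * inverse (fps_X - 1)"

lemma G_alt: "(G :: 'a::field_char_0 fps) = - (fps_X * E (-1))"
proof -
  have "(fps_X - 1 :: 'a fps) = - E 1" by (simp add: E_1)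
  moreover have "(- E 1 :: 'a fps) * (- E (-1)) = 1"
    using E_neg[of 1, where 'a='a] by (simp add: mult.commute)
  ultimately have "inverse (fps_X - 1 :: 'a fps) = - E (-1)"
    by (simp add: fps_inverse_unique)
  then show ?thesis by (simp add: G_def)
qed

lemma G0: "fps_nth (G :: 'a::field_char_0 fps) 0 = 0"
  by (simp add: G_alt)

lemma E_neg_pow: "(E (-1) :: 'a::field_char_0 fps) ^ j = E (- int j)"
proof (induction j)
  case 0 then show ?case by (simp add: E_0)
next
  case (Suc j)
  have "(E (- int (Suc j)) :: 'a fps) = E (-1) * E (- int j)"
    using E_add[of "-1" "- int j", where 'a='a] by simp
  then show ?case using Suc by simp
qed

lemma G_pow: "(G :: 'a::field_char_0 fps) ^ j = (-1)^j * fps_X ^ j * E (- int j)"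
proof -
  have "(G :: 'a fps) ^ j = (-1)^j * (fps_X * E (-1)) ^ j"
    unfolding G_alt by (rule power_minus)
  also have "\<dots> = (-1)^j * (fps_X ^ j * E (-1) ^ j)"
    by (simp only: power_mult_distrib)
  finally show ?thesis by (simp only: E_neg_pow mult.assoc)
qed

lemma T_E1: "(E 1 :: 'a::field_char_0 fps) oo G = E (-1)"
proof -
  have "(E 1 :: 'a fps) oo G = 1 - G"
    by (simp add: E_1 fps_compose_sub_distrib G0)
  also have "\<dots> = 1 + fps_X * E (-1)" by (simp add: G_alt)
  also have "\<dots> = E (-1) * E 1 + fps_X * E (-1)" by (simp add: E_neg)
  also have "\<dots> = E (-1)" by (simp add: E_1 algebra_simps)
  finally show ?thesis .
qed

lemma T_Enat: "(E (int n) :: 'a::field_char_0 fps) oo G = E (- int n)"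
proof -
  have "(E (int n) :: 'a fps) oo G = (E 1 ^ n) oo G" by (simp add: E_nat E_1)
  also have "\<dots> = (E 1 oo G) ^ n" by (simp add: fps_compose_power G0)
  also have "\<dots> = E (- int n)" by (simp add: T_E1 E_neg_pow)
  finally show ?thesis .
qed

lemma T_E: "(E k :: 'a::field_char_0 fps) oo G = E (- k)"
proof (cases "0 \<le> k")
  case True
  then show ?thesis using T_Enat[of "nat k", where 'a='a] by simp
next
  case False
  define n where "n = nat (-k)"
  have k: "k = - int n" using False by (simp add: n_def)
  have "(E k :: 'a fps) oo G = (E k oo G) * ((E (int n) oo G) * E (int n))"
    by (simp add: T_Enat k E_neg)
  also have "\<dots> = ((E k * E (int n)) oo G) * E (int n)"
    by (simp add: fps_compose_mult_distrib G0 mult.assoc)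
  also have "\<dots> = E (int n)" by (simp add: k E_neg)
  finally show ?thesis by (simp add: k)
qed

lemma GG: "(G oo G :: 'a::field_char_0 fps) = fps_X"
proof -
  have "(G oo G :: 'a fps) = - ((fps_X oo G) * (E (-1) oo G))"
    by (simp add: G_alt fps_compose_uminus fps_compose_mult_distrib G0)
  also have "\<dots> = - (G * E 1)"
    using T_E[of "-1", where 'a='a] by (simp add: G0)
  also have "\<dots> = fps_X * E (-1) * E 1" by (simp add: G_alt)
  also have "\<dots> = fps_X" by (simp add: E_neg mult.assoc)
  finally show ?thesis .
qed

lemma TT: "((\<phi> :: 'a::field_char_0 fps) oo G) oo G = \<phi>"
  by (simp add: fps_compose_assoc[symmetric] G0 GG)

lemma compose_nth_ext:
  assumes g0: "fps_nth g 0 = (0::'a::field_char_0)" and mn: "m \<le> n"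
  shows "fps_nth (\<phi> oo g) m = (\<Sum>i=0..n. fps_nth \<phi> i * fps_nth (g^i) m)"
proof -
  have "fps_nth (\<phi> oo g) m = (\<Sum>i=0..m. fps_nth \<phi> i * fps_nth (g^i) m)"
    by (simp add: fps_compose_nth)
  also have "\<dots> = (\<Sum>i=0..n. fps_nth \<phi> i * fps_nth (g^i) m)"
    using mn startsby_zero_power_prefix[OF g0]
    by (intro sum.mono_neutral_left) auto
  finally show ?thesis .
qed

lemma compose_mult_nth:
  assumes g0: "fps_nth g 0 = (0::'a::field_char_0)"
  shows "fps_nth (F * (\<phi> oo g)) n = (\<Sum>i=0..n. fps_nth \<phi> i * fps_nth (F * g^i) n)"
proof -
  have "fps_nth (F * (\<phi> oo g)) n = (\<Sum>k=0..n. fps_nth F k * (\<Sum>i=0..n. fps_nth \<phi> i * fps_nth (g^i) (n - k)))"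
    unfolding fps_mult_nth by (rule sum.cong) (auto simp: compose_nth_ext[OF g0])
  also have "\<dots> = (\<Sum>k=0..n. \<Sum>i=0..n. fps_nth \<phi> i * (fps_nth F k * fps_nth (g^i) (n - k)))"
    by (simp add: sum_distrib_left algebra_simps)
  also have "\<dots> = (\<Sum>i=0..n. \<Sum>k=0..n. fps_nth \<phi> i * (fps_nth F k * fps_nth (g^i) (n - k)))"
    by (rule sum.swap)
  also have "\<dots> = (\<Sum>i=0..n. fps_nth \<phi> i * fps_nth (F * g^i) n)"
    by (simp add: fps_mult_nth sum_distrib_left)
  finally show ?thesis .
qed

lemma EG_nth:
  assumes "j \<le> n"
  shows "fps_nth ((E b :: 'a::field_char_0 fps) * G^j) n = (-1)^j * fps_nth (E (b - int j)) (n - j)"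
proof -
  have c: "(-1::'a fps)^j = fps_const ((-1)^j)"
    by (simp add: fps_const_power[symmetric] fps_const_neg[symmetric])
  have "(E b :: 'a fps) * G^j = (-1)^j * (fps_X ^ j * (E b * E (- int j)))"
    by (simp add: G_pow algebra_simps)
  also have "\<dots> = fps_const ((-1)^j) * (fps_X ^ j * E (b - int j))"
    using E_add[of b "- int j", where 'a='a] c by simp
  finally have eq: "(E b :: 'a fps) * G^j = fps_const ((-1)^j) * (fps_X ^ j * E (b - int j))" .
  show ?thesis using assms unfolding eq fps_mult_left_const_nth fps_X_power_mult_nth by simp
qed

lemma key_term:
  fixes a j t n :: nat and b :: int
  assumes n: "int n = int a + b + 1" and ev: "even (int a - b)" and jt: "j + t = n"
  shows "fps_nth (E (int a) :: 'a::field_char_0 fps) t + (-1)^j * fps_nth (E (b - int j) :: 'a fps) t = 0"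
proof -
  define Y :: 'a where "Y = (of_nat t - of_nat a - 1) gchoose t"
  have bj: "(of_int (b - int j) :: 'a) = of_nat t - of_nat a - 1"
  proof -
    have "b - int j = int t - int a - 1" using n jt by linarith
    then have "(of_int (b - int j) :: 'a) = of_int (int t - int a - 1)" by simp
    then show ?thesis by simp
  qed
  have e1: "fps_nth (E (int a) :: 'a fps) t = Y"
    unfolding E_nth Y_def using gbinomial_negated_upper[of "of_nat a :: 'a" t]
    by (simp add: mult.assoc[symmetric] power_add[symmetric])
  have e2: "fps_nth (E (b - int j) :: 'a fps) t = (-1)^t * Y"
    unfolding E_nth Y_def bj ..
  have "odd n"
  proof -
    have "even (int a + b)" using ev by (metis add.commute diff_add_cancel even_add even_minus)
    then have "odd (int n)" using n by simp
    then show ?thesis by simp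
  qed
  then have "(-1::'a)^j * (-1)^t = -1"
    using jt by (simp add: power_add[symmetric])
  then show ?thesis unfolding e1 e2
    by (metis add.inverse_inverse mult.assoc mult_minus_left neg_eq_iff_add_eq_0 mult_1)
qed

lemma key:
  fixes a n :: nat and b :: int and \<phi> :: "'a::field_char_0 fps"
  assumes n: "int n = int a + b + 1" and ev: "even (int a - b)"
  shows "fps_nth (E (int a) * \<phi>) n + fps_nth (E b * (\<phi> oo G)) n = 0"
proof -
  have s2: "fps_nth (E b * (\<phi> oo G)) n = (\<Sum>j=0..n. fps_nth \<phi> j * ((-1)^j * fps_nth (E (b - int j) :: 'a fps) (n - j)))"
    unfolding compose_mult_nth[OF G0] by (rule sum.cong) (auto simp: EG_nth)
  have s1: "fps_nth (E (int a) * \<phi>) n = (\<Sum>j=0..n. fps_nth \<phi> j * fps_nth (E (int a) :: 'a fps) (n - j))"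
    by (subst mult.commute) (simp add: fps_mult_nth)
  have "fps_nth (E (int a) * \<phi>) n + fps_nth (E b * (\<phi> oo G)) n
      = (\<Sum>j=0..n. fps_nth \<phi> j * (fps_nth (E (int a) :: 'a fps) (n - j) + (-1)^j * fps_nth (E (b - int j) :: 'a fps) (n - j)))"
    unfolding s1 s2 by (simp add: sum.distrib[symmetric] distrib_left)
  also have "\<dots> = 0"
    by (rule sum.neutral) (auto simp: key_term[OF n ev])
  finally show ?thesis .
qed

lemma sum_to_E:
  fixes a n :: nat and \<phi> :: "'a::field_char_0 fps"
  shows "(\<Sum>i = 0..a. (-1) ^ i * of_nat (a choose i) * coeff_int \<phi> (int n - int a + int i))
         = (-1)^a * fps_nth (E (int a) * \<phi>) n"
proof -
  define h where "h i = (-1::'a) ^ i * of_nat (a choose i) * coeff_int \<phi> (int n - int i)" for i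
  have "(\<Sum>i = 0..a. (-1) ^ i * of_nat (a choose i) * coeff_int \<phi> (int n - int a + int i))
      = (\<Sum>i = 0..a. (-1) ^ (a - i) * of_nat (a choose (a - i)) * coeff_int \<phi> (int n - int i))"
    by (subst sum.atLeastAtMost_rev) (rule sum.cong, auto simp: of_nat_diff)
  also have "\<dots> = (\<Sum>i = 0..a. (-1)^a * h i)"
  proof (rule sum.cong)
    fix i assume "i \<in> {0..a}"
    then have ia: "i \<le> a" by simp
    have "(-1::'a) ^ (a - i) = (-1)^a * (-1)^i"
    proof -
      have x: "(-1::'a) ^ a = (-1) ^ (a - i) * (-1)^i" using ia by (simp add: power_add[symmetric])
      have y: "(-1::'a)^i * (-1)^i = 1" by (simp add: power_mult_distrib[symmetric])
      have "(-1::'a)^a * (-1)^i = (-1) ^ (a - i) * ((-1)^i * (-1)^i)" unfolding x by (simp only: mult.assoc)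
      then show ?thesis unfolding y by simp
    qed
    then show "(-1) ^ (a - i) * of_nat (a choose (a - i)) * coeff_int \<phi> (int n - int i) = (-1)^a * h i"
      using ia by (simp add: h_def binomial_symmetric[symmetric] mult.assoc)
  qed simp
  also have "\<dots> = (-1)^a * (\<Sum>i = 0..a + n. h i)"
    by (simp add: sum_distrib_left[symmetric])
       (rule sum.mono_neutral_left, auto simp: h_def)
  also have "(\<Sum>i = 0..a + n. h i) = (\<Sum>i = 0..n. h i)"
    by (rule sum.mono_neutral_right) (auto simp: h_def coeff_int_def)
  also have "\<dots> = fps_nth (E (int a) * \<phi>) n"
    unfolding fps_mult_nth E_nth h_def
    by (rule sum.cong) (auto simp: coeff_int_def binomial_gbinomial of_nat_diff nat_diff_distrib)
  finally show ?thesis .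
qed

lemma mult_nth_subdeg:
  assumes "\<forall>j<N. fps_nth D j = (0::'a::field_char_0)"
  shows "fps_nth (F * D) N = fps_nth F 0 * fps_nth D N"
proof -
  have "fps_nth (F * D) N = (\<Sum>i\<in>{0}. fps_nth F i * fps_nth D (N - i))"
    unfolding fps_mult_nth using assms by (intro sum.mono_neutral_right) auto
  then show ?thesis by simp
qed

lemma G_pow_nth: "fps_nth ((G :: 'a::field_char_0 fps) ^ N) N = (-1)^N"
  using EG_nth[of N N 0, where 'a='a] by (simp add: E_0 E_nth)

lemma compose_nth_subdeg:
  assumes "\<forall>j<N. fps_nth D j = (0::'a::field_char_0)"
  shows "fps_nth (D oo G) N = (-1)^N * fps_nth D N"
proof -
  have "fps_nth (D oo G) N = (\<Sum>i\<in>{N}. fps_nth D i * fps_nth (G^i) N)"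
    unfolding fps_compose_nth using assms by (intro sum.mono_neutral_right) auto
  then show ?thesis by (simp add: G_pow_nth)
qed

lemma lin: "(d::'a::field) = t - x \<Longrightarrow> x + t = 0 \<Longrightarrow> d = - 2 * x"
proof -
  assume a: "d = t - x" and b: "x + t = 0"
  from b have "t + x = 0" by (simp only: add.commute)
  then have "t = - x" by (simp only: eq_neg_iff_add_eq_0)
  with a show ?thesis by (simp add: algebra_simps)
qed

theorem corollary4p2:
  fixes \<phi> :: "'a::field_char_0 fps" and r :: int
  assumes "even r"
    and "r < 0 \<Longrightarrow> (\<forall>i::nat. int i \<le> - r \<longrightarrow> fps_nth \<phi> i = 0)"
  shows "(\<forall>m::nat. m \<ge> 1 \<longrightarrow>
            (\<Sum>i = 0..m - 1. (-1) ^ i * of_nat ((m - 1) choose i) * coeff_int \<phi> (int m - r + int i)) = 0)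
         \<longleftrightarrow> \<phi> \<in> F_space r"
proof -
  define S where "S m = (\<Sum>i = 0..m - 1. (-1) ^ i * of_nat ((m - 1) choose i) * coeff_int \<phi> (int m - r + int i))" for m
  define D where "D = (\<phi> oo G) - E r * \<phi>"
  have F: "\<phi> \<in> F_space r \<longleftrightarrow> D = 0"
    by (simp add: F_space_def D_def G_def[symmetric] int_power_E)
  define P where "P m = fps_nth (E (int (m - 1)) * \<phi>) (nat (2 * int m - 1 - r))" for m
  have A: "S m = (-1)^(m-1) * P m" if "m \<ge> 1" "0 \<le> 2 * int m - 1 - r" for m
  proof -
    have "S m = (\<Sum>i = 0..m - 1. (-1) ^ i * of_nat ((m - 1) choose i) *
                 coeff_int \<phi> (int (nat (2 * int m - 1 - r)) - int (m - 1) + int i))"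
      unfolding S_def using that by (intro sum.cong) auto
    then show ?thesis unfolding P_def sum_to_E .
  qed
  have B: "S m = 0" if "m \<ge> 1" "2 * int m - 1 - r < 0" for m
    unfolding S_def using that by (intro sum.neutral) (auto simp: coeff_int_def)
  have C: "fps_nth (E (int (m - 1) - r) * D) (nat (2 * int m - 1 - r)) = - 2 * P m"
    if "m \<ge> 1" "0 \<le> 2 * int m - 1 - r" for m
  proof -
    let ?n = "nat (2 * int m - 1 - r)"
    have k: "fps_nth (E (int (m - 1)) * \<phi>) ?n + fps_nth (E (int (m - 1) - r) * (\<phi> oo G)) ?n = 0"
      by (rule key) (use that assms(1) in auto)
    have ee: "E (int (m - 1) - r) * E r = (E (int (m - 1)) :: 'a fps)"
      using E_add[of "int (m - 1) - r" r, where 'a='a] by simp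
    have "E (int (m - 1) - r) * D = E (int (m - 1) - r) * (\<phi> oo G) - (E (int (m - 1) - r) * E r) * \<phi>"
      unfolding D_def by (simp only: right_diff_distrib mult.assoc)
    then have "E (int (m - 1) - r) * D = E (int (m - 1) - r) * (\<phi> oo G) - E (int (m - 1)) * \<phi>"
      unfolding ee .
    then have "fps_nth (E (int (m - 1) - r) * D) ?n
        = fps_nth (E (int (m - 1) - r) * (\<phi> oo G)) ?n - fps_nth (E (int (m - 1)) * \<phi>) ?n"
      by (simp only: fps_sub_nth)
    from lin[OF this k] show ?thesis unfolding P_def .
  qed
  show ?thesis
  proof
    assume "\<phi> \<in> F_space r"
    then have D0: "D = 0" using F by simp
    show "\<forall>m::nat. m \<ge> 1 \<longrightarrow>
            (\<Sum>i = 0..m - 1. (-1) ^ i * of_nat ((m - 1) choose i) * coeff_int \<phi> (int m - r + int i)) = 0"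
      unfolding S_def[symmetric]
    proof (intro allI impI)
      fix m :: nat assume m: "m \<ge> 1"
      show "S m = 0"
      proof (cases "0 \<le> 2 * int m - 1 - r")
        case True
        with C[OF m True] D0 have "P m = 0" by simp
        then show ?thesis using A[OF m True] by simp
      next
        case False then show ?thesis using B[OF m] by simp
      qed
    qed
  next
    assume "\<forall>m::nat. m \<ge> 1 \<longrightarrow>
            (\<Sum>i = 0..m - 1. (-1) ^ i * of_nat ((m - 1) choose i) * coeff_int \<phi> (int m - r + int i)) = 0"
    then have H: "\<forall>m::nat. m \<ge> 1 \<longrightarrow> S m = 0" unfolding S_def .
    show "\<phi> \<in> F_space r" unfolding F
    proof (rule ccontr)
      assume "D \<noteq> 0"
      define N where "N = subdegree D"
      have DN: "fps_nth D N \<noteq> 0" using \<open>D \<noteq> 0\<close> by (simp add: N_def)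
      have low: "\<forall>j<N. fps_nth D j = 0" unfolding N_def using nth_less_subdegree_zero by blast
      have anti: "D oo G = - (E (-r) * D)"
      proof -
        have "D oo G = \<phi> - (E r oo G) * (\<phi> oo G)"
          by (simp add: D_def fps_compose_sub_distrib fps_compose_mult_distrib G0 TT)
        also have "\<dots> = \<phi> - E (-r) * (\<phi> oo G)" by (simp add: T_E)
        also have "\<dots> = - (E (-r) * D)"
          using E_neg[of r, where 'a='a] by (simp add: D_def algebra_simps)
        finally show ?thesis .
      qed
      have neg: "(-1)^N * fps_nth D N = - fps_nth D N"
      proof -
        have "(-1)^N * fps_nth D N = fps_nth (D oo G) N" using compose_nth_subdeg[OF low] by simp
        also have "\<dots> = - fps_nth (E (-r) * D) N" by (simp add: anti)
        also have "\<dots> = - fps_nth D N" by (simp add: mult_nth_subdeg[OF low] E_nth)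
        finally show ?thesis .
      qed
      have oddN: "odd N"
      proof (rule ccontr)
        assume "\<not> odd N"
        then have "fps_nth D N = - fps_nth D N" using neg by simp
        then have "fps_nth D N + fps_nth D N = 0" by (simp only: eq_neg_iff_add_eq_0)
        then have "2 * fps_nth D N = 0" by (simp only: mult_2)
        then show False using DN by simp
      qed
      have N1: "1 - r \<le> int N"
      proof (cases "r < 0")
        case True
        have "fps_nth D j = 0" if "int j \<le> - r" for j
        proof -
          have z: "fps_nth \<phi> i = 0" if "i \<le> j" for i
            using assms(2)[OF True] that \<open>int j \<le> - r\<close> by auto
          have "fps_nth (\<phi> oo G) j = 0" unfolding fps_compose_nth
            by (rule sum.neutral) (auto simp: z)
          moreover have "fps_nth (E r * \<phi>) j = 0" unfolding fps_mult_nth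
            by (rule sum.neutral) (auto simp: z)
          ultimately show ?thesis by (simp add: D_def)
        qed
        then have "\<not> int N \<le> - r" using DN by blast
        then show ?thesis by simp
      next
        case False
        then show ?thesis using oddN by (cases N) auto
      qed
      have "even (int N + 1 + r)" using oddN assms(1) by simp
      then obtain k where k: "int N + 1 + r = 2 * k" by (rule evenE)
      define m where "m = nat k"
      have m1: "m \<ge> 1" using k N1 by (simp add: m_def)
      have mN: "2 * int m - 1 - r = int N" using k N1 by (simp add: m_def)
      have "S m = 0" using H m1 by simp
      then have "P m = 0" using A[OF m1] mN by simp
      then have "fps_nth (E (int (m - 1) - r) * D) N = 0" using C[OF m1] mN by simp
      moreover have "fps_nth (E (int (m - 1) - r) * D) N = fps_nth D N"
        by (simp add: mult_nth_subdeg[OF low] E_nth)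
      ultimately show False using DN by simp
    qed
  qed
qed

end
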